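(* Let $W$ be a real vector space, $e_1,\dots,e_n\in W$ and $\phi_1,\dots,\phi_n\in\operatorname{Hom}_{\mathbb{R}}(W,\mathbb{R})$ such that (a) $\{(a_1,\dots,a_n)\in\mathbb{R}_{\ge0}^n:a_1e_1+\cdots+a_ne_n=0\}=\{0\}$; (b) $\phi_i(e_j)\ge0$ for all $i\neq j$; (c) $\{x\in\mathbb{R}_{\ge0}e_1+\cdots+\mathbb{R}_{\ge0}e_n:\phi_i(x)\ge0\text{ for all }i\}=\{0\}$. Then: (1) for $Q=(\phi_i(e_j))_{i,j}$ there are $n\times n$ matrices $A$ (lower triangular) and $B$ (upper triangular) with non-negative entries, $\det A>0$, $\det B>0$ and $AQB=-I_n$; moreover, if $Q$ is symmetric one can take $B={}^tA$; (2) $e_1,\dots,e_n$ are linearly independent in $W/\{x\in W:\phi_1(x)=\cdots=\phi_n(x)=0\}$. *)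

theory Defs
  imports Complex_Main "Jordan_Normal_Form.Determinant"
begin

definition lower_triangular :: "'a::zero mat \<Rightarrow> bool" where
  "lower_triangular A \<equiv> \<forall>i < dim_row A. \<forall>j < dim_col A. i < j \<longrightarrow> A $$ (i,j) = 0"

definition nonneg_mat :: "real mat \<Rightarrow> bool" where
  "nonneg_mat A \<equiv> \<forall>i < dim_row A. \<forall>j < dim_col A. A $$ (i,j) \<ge> 0"

end

theory Submission imports Defs begin

lemma prod_list_pos: "\<forall>x\<in>set xs. x > 0 \<Longrightarrow> prod_list xs > (0::real)"
  by (induction xs) auto

lemma det_pos_upper: assumes "A \<in> carrier_mat n n" "upper_triangular A" "\<forall>i<n. A$$(i,i) > (0::real)"
  shows "det A > 0"
  using assms by (auto simp: det_upper_triangular[OF assms(2,1)] diag_mat_def intro!: prod_list_pos)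

lemma det_pos_lower: assumes A: "A \<in> carrier_mat n n" and "lower_triangular A" "\<forall>i<n. A$$(i,i) > (0::real)"
  shows "det A > 0"
proof -
  have "upper_triangular (transpose_mat A)" using assms unfolding lower_triangular_def upper_triangular_def by auto
  then have "det (transpose_mat A) > 0" using assms by (intro det_pos_upper[of _ n]) auto
  then show ?thesis using det_transpose[OF A] by simp
qed

lemma lt_mult: assumes A: "A \<in> carrier_mat n n" and B: "B \<in> carrier_mat n n"
  and "lower_triangular A" "lower_triangular B" shows "lower_triangular (A*B)"
  unfolding lower_triangular_def
proof (intro allI impI)
  fix i j assume ij: "i < dim_row (A*B)" "j < dim_col (A*B)" "i < j"
  have "(A*B)$$(i,j) = (\<Sum>l\<in>{0..<n}. A$$(i,l) * B$$(l,j))" using A B ij by (simp add: scalar_prod_def)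
  also have "\<dots> = 0"
  proof (rule sum.neutral, rule ballI)
    fix l assume l: "l \<in> {0..<n}"
    show "A$$(i,l) * B$$(l,j) = 0"
    proof (cases "l \<le> i")
      case True then show ?thesis using assms ij l unfolding lower_triangular_def by auto
    next
      case False then show ?thesis using assms ij l unfolding lower_triangular_def by auto
    qed
  qed
  finally show "(A*B)$$(i,j) = 0" .
qed

lemma ut_mult: assumes A: "A \<in> carrier_mat n n" and B: "B \<in> carrier_mat n n"
  and "upper_triangular A" "upper_triangular B" shows "upper_triangular (A*B)"
  unfolding upper_triangular_def
proof (intro allI impI)
  fix i j assume ij: "i < dim_row (A*B)" "j < i"
  have "(A*B)$$(i,j) = (\<Sum>l\<in>{0..<n}. A$$(i,l) * B$$(l,j))" using A B ij by (simp add: scalar_prod_def)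
  also have "\<dots> = 0"
  proof (rule sum.neutral, rule ballI)
    fix l assume l: "l \<in> {0..<n}"
    show "A$$(i,l) * B$$(l,j) = 0"
    proof (cases "l < i")
      case True then show ?thesis using assms ij l unfolding upper_triangular_def by auto
    next
      case False then show ?thesis using assms ij l unfolding upper_triangular_def by auto
    qed
  qed
  finally show "(A*B)$$(i,j) = 0" .
qed

lemma nn_mult: assumes A: "A \<in> carrier_mat n n" and B: "B \<in> carrier_mat n n"
  and "nonneg_mat A" "nonneg_mat B" shows "nonneg_mat (A*B)"
  using assms unfolding nonneg_mat_def
  by (auto simp: scalar_prod_def intro!: sum_nonneg)


lemma step_prod:
  fixes Q :: "real mat"
  assumes Q: "Q \<in> carrier_mat n n" and k: "k < n"
    and struct: "\<forall>i<n. \<forall>j<n. (i<k \<or> j<k) \<longrightarrow> Q$$(i,j) = (if i=j then -1 else 0)"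
    and q: "Q$$(k,k) < 0"
    and s: "s = 1 / sqrt (- Q$$(k,k))"
  defines "A1 \<equiv> mat n n (\<lambda>(i,l). (if i = l then (if i = k then s else 1) else 0) + (if l = k \<and> k < i then - Q$$(i,k)/Q$$(k,k) else 0))"
    and "B1 \<equiv> mat n n (\<lambda>(l,j). (if l = j then (if j = k then s else 1) else 0) + (if l = k \<and> k < j then - Q$$(k,j)/Q$$(k,k) else 0))"
    and "Q2 \<equiv> mat n n (\<lambda>(i,j). if i \<le> k \<or> j \<le> k then (if i = j then -1 else 0) else Q$$(i,j) - Q$$(i,k)*Q$$(k,j)/Q$$(k,k))"
  shows "A1 * Q * B1 = Q2"
proof -
  let ?q = "Q$$(k,k)"
  define M where "M = mat n n (\<lambda>(i,j). if i = k then s*Q$$(k,j) else if k < i then Q$$(i,j) - Q$$(i,k) * Q$$(k,j) / ?q else Q$$(i,j))"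
  have AQ: "A1 * Q = M"
  proof (rule eq_matI)
    fix i j assume ij: "i < dim_row M" "j < dim_col M"
    have "(A1 * Q)$$(i,j) = (\<Sum>l\<in>{0..<n}. A1$$(i,l) * Q$$(l,j))" using Q ij by (simp add: A1_def M_def scalar_prod_def)
    also have "\<dots> = (\<Sum>l\<in>{0..<n}. (if i = l then (if i = k then s else 1) * Q$$(l,j) else 0) + (if l = k then (if k < i then - Q$$(i,k)/?q * Q$$(l,j) else 0) else 0))"
      using ij by (intro sum.cong) (auto simp: A1_def M_def)
    also have "\<dots> = M$$(i,j)" using ij k by (simp add: sum.distrib M_def)
    finally show "(A1 * Q)$$(i,j) = M$$(i,j)" .
  qed (use Q in \<open>auto simp: A1_def M_def\<close>)
  have s2: "s * s * ?q = -1" using q s by (simp add: real_sqrt_mult[symmetric])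
  have MB: "M * B1 = Q2"
  proof (rule eq_matI)
    fix i j assume ij: "i < dim_row Q2" "j < dim_col Q2"
    have "(M * B1)$$(i,j) = (\<Sum>l\<in>{0..<n}. M$$(i,l) * B1$$(l,j))" using Q ij by (simp add: B1_def M_def Q2_def scalar_prod_def)
    also have "\<dots> = (\<Sum>l\<in>{0..<n}. (if l = j then M$$(i,l) * (if j = k then s else 1) else 0) + (if l = k then (if k < j then M$$(i,l) * (- Q$$(k,j)/?q) else 0) else 0))"
      using ij by (intro sum.cong) (auto simp: B1_def Q2_def)
    also have "\<dots> = M$$(i,j) * (if j = k then s else 1) + (if k < j then M$$(i,k) * (- Q$$(k,j)/?q) else 0)"
      using ij k by (simp add: sum.distrib Q2_def)
    also have "\<dots> = Q2$$(i,j)"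
    proof -
      have "i < n" "j < n" using ij by (auto simp: Q2_def)
      then show ?thesis using struct k q s2
        by (cases "i < k"; cases "i = k"; cases "j < k"; cases "j = k")
           (auto simp: M_def Q2_def field_simps)
    qed
    finally show "(M * B1)$$(i,j) = Q2$$(i,j)" .
  qed (auto simp: B1_def M_def Q2_def)
  show ?thesis using AQ MB by simp
qed


lemma core:
  fixes Q :: "real mat"
  assumes "k \<le> n" "Q \<in> carrier_mat n n"
    "\<forall>i<n. \<forall>j<n. (i<k \<or> j<k) \<longrightarrow> Q$$(i,j) = (if i=j then -1 else 0)"
    "\<forall>i<n. \<forall>j<n. k\<le>i \<longrightarrow> k\<le>j \<longrightarrow> i\<noteq>j \<longrightarrow> Q$$(i,j) \<ge> 0"
    "\<forall>a. (\<forall>i. k\<le>i \<and> i<n \<longrightarrow> a i \<ge> 0) \<longrightarrow> (\<forall>i. k\<le>i \<and> i<n \<longrightarrow> (\<Sum>j\<in>{k..<n}. Q$$(i,j) * a j) \<ge> 0) \<longrightarrow> (\<forall>i. k\<le>i \<and> i<n \<longrightarrow> a i = 0)"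
  shows "\<exists>A B. A \<in> carrier_mat n n \<and> B \<in> carrier_mat n n \<and> lower_triangular A \<and> upper_triangular B \<and>
     nonneg_mat A \<and> nonneg_mat B \<and> det A > 0 \<and> det B > 0 \<and> A*Q*B = -1\<^sub>m n \<and>
     (transpose_mat Q = Q \<longrightarrow> B = transpose_mat A)"
  using assms
proof (induction "n - k" arbitrary: k Q)
  case 0
  then have kn: "k = n" by simp
  have "Q = -1\<^sub>m n" using 0 kn by (intro eq_matI) auto
  then show ?case
    by (intro exI[of _ "1\<^sub>m n"]) (auto simp: lower_triangular_def nonneg_mat_def)
next
  case (Suc m k Q)
  note Q = Suc.prems(2) and struct = Suc.prems(3) and offd = Suc.prems(4) and negM = Suc.prems(5)
  have k: "k < n" using Suc.hyps by simp
  let ?q = "Q$$(k,k)"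
  have q: "?q < 0"
  proof (rule ccontr)
    assume nq: "\<not> ?q < 0"
    define a :: "nat \<Rightarrow> real" where "a = (\<lambda>j. if j = k then 1 else 0)"
    have "\<forall>i. k\<le>i \<and> i<n \<longrightarrow> (\<Sum>j\<in>{k..<n}. Q$$(i,j) * a j) \<ge> 0"
    proof (intro allI impI)
      fix i assume i: "k\<le>i \<and> i<n"
      have "(\<Sum>j\<in>{k..<n}. Q$$(i,j) * a j) = (\<Sum>j\<in>{k..<n}. if j = k then Q$$(i,j) else 0)"
        by (intro sum.cong) (auto simp: a_def)
      also have "\<dots> = Q$$(i,k)" using k by simp
      finally have "(\<Sum>j\<in>{k..<n}. Q$$(i,j) * a j) = Q$$(i,k)" .
      then show "(\<Sum>j\<in>{k..<n}. Q$$(i,j) * a j) \<ge> 0" using nq offd i k by (cases "i = k") auto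
    qed
    moreover have "\<forall>i. k\<le>i \<and> i<n \<longrightarrow> a i \<ge> 0" by (simp add: a_def)
    ultimately have "\<forall>i. k\<le>i \<and> i<n \<longrightarrow> a i = 0" using negM by blast
    then show False using k by (auto simp: a_def)
  qed
  define s where "s = 1 / sqrt (- ?q)"
  have spos: "s > 0" using q by (simp add: s_def)
  define A1 where "A1 \<equiv> mat n n (\<lambda>(i,l). (if i = l then (if i = k then s else 1) else 0) + (if l = k \<and> k < i then - Q$$(i,k)/Q$$(k,k) else 0))"
  define B1 where "B1 \<equiv> mat n n (\<lambda>(l,j). (if l = j then (if j = k then s else 1) else 0) + (if l = k \<and> k < j then - Q$$(k,j)/Q$$(k,k) else 0))"
  define Q2 where "Q2 \<equiv> mat n n (\<lambda>(i,j). if i \<le> k \<or> j \<le> k then (if i = j then -1 else 0) else Q$$(i,j) - Q$$(i,k)*Q$$(k,j)/Q$$(k,k))"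
  have prod: "A1 * Q * B1 = Q2" unfolding A1_def B1_def Q2_def
    by (rule step_prod[OF Q k struct q s_def])
  have A1c: "A1 \<in> carrier_mat n n" and B1c: "B1 \<in> carrier_mat n n" and Q2c: "Q2 \<in> carrier_mat n n"
    by (auto simp: A1_def B1_def Q2_def)
  have A1lt: "lower_triangular A1" by (auto simp: A1_def lower_triangular_def)
  have B1ut: "upper_triangular B1" by (auto simp: B1_def upper_triangular_def)
  have A1nn: "nonneg_mat A1" using q offd spos k
    by (auto simp: A1_def nonneg_mat_def divide_nonneg_neg intro!: divide_nonneg_neg)
  have B1nn: "nonneg_mat B1" using q offd spos k
    by (auto simp: B1_def nonneg_mat_def intro!: divide_nonneg_neg)
  have A1d: "det A1 > 0" using spos
    by (intro det_pos_lower[OF A1c A1lt]) (auto simp: A1_def)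
  have B1d: "det B1 > 0" using spos
    by (intro det_pos_upper[OF B1c B1ut]) (auto simp: B1_def)
  have Q2struct: "\<forall>i<n. \<forall>j<n. (i<Suc k \<or> j<Suc k) \<longrightarrow> Q2$$(i,j) = (if i=j then -1 else 0)"
    by (auto simp: Q2_def)
  have Q2offd: "\<forall>i<n. \<forall>j<n. Suc k\<le>i \<longrightarrow> Suc k\<le>j \<longrightarrow> i\<noteq>j \<longrightarrow> Q2$$(i,j) \<ge> 0"
  proof (intro allI impI)
    fix i j assume ij: "i<n" "j<n" "Suc k\<le>i" "Suc k\<le>j" "i\<noteq>j"
    have "Q$$(i,k)*Q$$(k,j) \<ge> 0" using offd ij k by auto
    then have "Q$$(i,k)*Q$$(k,j)/?q \<le> 0" using q by (simp add: divide_nonneg_neg)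
    moreover have "Q$$(i,j) \<ge> 0" using offd ij by auto
    ultimately show "Q2$$(i,j) \<ge> 0" using ij by (auto simp: Q2_def)
  qed
  have Q2neg: "\<forall>a. (\<forall>i. Suc k\<le>i \<and> i<n \<longrightarrow> a i \<ge> 0) \<longrightarrow> (\<forall>i. Suc k\<le>i \<and> i<n \<longrightarrow> (\<Sum>j\<in>{Suc k..<n}. Q2$$(i,j) * a j) \<ge> 0) \<longrightarrow> (\<forall>i. Suc k\<le>i \<and> i<n \<longrightarrow> a i = 0)"
  proof (intro allI impI)
    fix a :: "nat \<Rightarrow> real" and i
    assume apos: "\<forall>i. Suc k\<le>i \<and> i<n \<longrightarrow> a i \<ge> 0"
      and asum: "\<forall>i. Suc k\<le>i \<and> i<n \<longrightarrow> (\<Sum>j\<in>{Suc k..<n}. Q2$$(i,j) * a j) \<ge> 0"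
      and i: "Suc k\<le>i \<and> i<n"
    define S where "S = (\<Sum>j\<in>{Suc k..<n}. Q$$(k,j) * a j)"
    define b where "b = a(k := - S / ?q)"
    have S0: "S \<ge> 0" unfolding S_def using apos offd k by (intro sum_nonneg) auto
    have bpos: "\<forall>i. k\<le>i \<and> i<n \<longrightarrow> b i \<ge> 0"
      using apos S0 q by (auto simp: b_def intro!: divide_nonneg_neg)
    have split: "(\<Sum>j\<in>{k..<n}. Q$$(i,j) * b j) = Q$$(i,k) * b k + (\<Sum>j\<in>{Suc k..<n}. Q$$(i,j) * a j)" for i
      using k by (simp add: sum.atLeast_Suc_lessThan b_def)
    have bsum: "\<forall>i. k\<le>i \<and> i<n \<longrightarrow> (\<Sum>j\<in>{k..<n}. Q$$(i,j) * b j) \<ge> 0"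
    proof (intro allI impI)
      fix i assume i: "k\<le>i \<and> i<n"
      show "(\<Sum>j\<in>{k..<n}. Q$$(i,j) * b j) \<ge> 0"
      proof (cases "i = k")
        case True
        then show ?thesis using split[of k] q by (simp add: b_def S_def)
      next
        case False
        then have i': "Suc k \<le> i \<and> i < n" using i by auto
        have "(\<Sum>j\<in>{Suc k..<n}. Q2$$(i,j) * a j) = (\<Sum>j\<in>{Suc k..<n}. Q$$(i,j) * a j - Q$$(i,k) / ?q * (Q$$(k,j) * a j))"
          using i' by (intro sum.cong) (auto simp: Q2_def algebra_simps)
        also have "\<dots> = (\<Sum>j\<in>{Suc k..<n}. Q$$(i,j) * a j) - Q$$(i,k) / ?q * S"
          by (simp add: sum_subtractf sum_distrib_left S_def)
        also have "\<dots> = (\<Sum>j\<in>{k..<n}. Q$$(i,j) * b j)"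
          using split[of i] by (simp add: b_def)
        finally have eq: "(\<Sum>j\<in>{Suc k..<n}. Q2$$(i,j) * a j) = (\<Sum>j\<in>{k..<n}. Q$$(i,j) * b j)" .
        show ?thesis using asum i' eq by metis
      qed
    qed
    have "\<forall>i. k\<le>i \<and> i<n \<longrightarrow> b i = 0" using negM bpos bsum by blast
    then have "b i = 0" using i by auto
    then show "a i = 0" using i by (simp add: b_def)
  qed
  have "m = n - Suc k" using Suc.hyps by simp
  from Suc.hyps(1)[OF this _ Q2c Q2struct Q2offd Q2neg] k
  obtain A2 B2 where A2: "A2 \<in> carrier_mat n n" "B2 \<in> carrier_mat n n" "lower_triangular A2" "upper_triangular B2"
     "nonneg_mat A2" "nonneg_mat B2" "det A2 > 0" "det B2 > 0" "A2*Q2*B2 = -1\<^sub>m n"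
     "transpose_mat Q2 = Q2 \<longrightarrow> B2 = transpose_mat A2" by auto
  have c1: "A2 * A1 \<in> carrier_mat n n" "B1 * B2 \<in> carrier_mat n n" using A2 A1c B1c by auto
  have c2: "lower_triangular (A2 * A1)" using lt_mult A2 A1c A1lt by blast
  have c3: "upper_triangular (B1 * B2)" using ut_mult A2 B1c B1ut by blast
  have c4: "nonneg_mat (A2 * A1)" using nn_mult A2 A1c A1nn by blast
  have c5: "nonneg_mat (B1 * B2)" using nn_mult A2 B1c B1nn by blast
  have c6: "det (A2 * A1) > 0" using det_mult[OF A2(1) A1c] A2 A1d by simp
  have c7: "det (B1 * B2) > 0" using det_mult[OF B1c A2(2)] A2 B1d by simp
  have "A2 * A1 * Q * (B1 * B2) = A2 * (A1 * Q * B1) * B2"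
    using A2 A1c B1c Q by (simp add: assoc_mult_mat[of _ n n _ n _ n])
  then have c8: "A2 * A1 * Q * (B1 * B2) = -1\<^sub>m n" using prod A2 by simp
  have c9: "B1 * B2 = transpose_mat (A2 * A1)" if sym: "transpose_mat Q = Q"
  proof -
    have symQ: "Q$$(i,j) = Q$$(j,i)" if "i<n" "j<n" for i j
      using that Q sym by (metis carrier_matD index_transpose_mat(1))
    have "transpose_mat Q2 = Q2" using symQ k by (intro eq_matI) (auto simp: Q2_def mult.commute)
    then have B2: "B2 = transpose_mat A2" using A2 by simp
    have B1: "B1 = transpose_mat A1" using symQ k by (intro eq_matI) (auto simp: A1_def B1_def)
    show "B1 * B2 = transpose_mat (A2 * A1)" using B1 B2 transpose_mult[OF A2(1) A1c] by simp
  qed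
  show ?case
    apply (rule exI[of _ "A2*A1"], rule exI[of _ "B1*B2"])
    using c1 c2 c3 c4 c5 c6 c7 c8 c9 by blast
qed


lemma phi_sum: assumes "linear (f :: 'w::real_vector \<Rightarrow> real)"
  shows "f (\<Sum>j<n. c j *\<^sub>R e j) = (\<Sum>j<n. c j * f (e j))"
  using assms by (simp add: linear_sum linear_scale o_def)

theorem lemma1p2p3:
  fixes n :: nat
    and e :: "nat \<Rightarrow> 'w::real_vector"
    and \<phi> :: "nat \<Rightarrow> 'w \<Rightarrow> real"
  assumes lin: "\<And>i. i < n \<Longrightarrow> linear (\<phi> i)"
    and a: "\<And>c. (\<forall>i<n. c i \<ge> 0) \<Longrightarrow> (\<Sum>i<n. c i *\<^sub>R e i) = 0 \<Longrightarrow> \<forall>i<n. c i = 0"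
    and b: "\<And>i j. i < n \<Longrightarrow> j < n \<Longrightarrow> i \<noteq> j \<Longrightarrow> \<phi> i (e j) \<ge> 0"
    and c: "\<And>x. x \<in> {\<Sum>i<n. c i *\<^sub>R e i | c. \<forall>i<n. c i \<ge> 0} \<Longrightarrow>
               (\<forall>i<n. \<phi> i x \<ge> 0) \<Longrightarrow> x = 0"
  shows "(let Q = mat n n (\<lambda>(i,j). \<phi> i (e j)) in
            (\<exists>A B. A \<in> carrier_mat n n \<and> B \<in> carrier_mat n n \<and>
                   lower_triangular A \<and> upper_triangular B \<and>
                   nonneg_mat A \<and> nonneg_mat B \<and> det A > 0 \<and> det B > 0 \<and>
                   A * Q * B = - 1\<^sub>m n) \<and>
            (transpose_mat Q = Q \<longrightarrow>
              (\<exists>A. A \<in> carrier_mat n n \<and> lower_triangular A \<and>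
                   upper_triangular (transpose_mat A) \<and>
                   nonneg_mat A \<and> nonneg_mat (transpose_mat A) \<and>
                   det A > 0 \<and> det (transpose_mat A) > 0 \<and>
                   A * Q * transpose_mat A = - 1\<^sub>m n)))
         \<and> (\<forall>c. (\<Sum>j<n. c j *\<^sub>R e j) \<in> {x. \<forall>i<n. \<phi> i x = 0} \<longrightarrow> (\<forall>j<n. c j = 0))"
proof -
  define Q where "Q = mat n n (\<lambda>(i,j). \<phi> i (e j))"
  have Qc: "Q \<in> carrier_mat n n" by (simp add: Q_def)
  have negM: "\<forall>a. (\<forall>i. 0\<le>i \<and> i<n \<longrightarrow> a i \<ge> 0) \<longrightarrow> (\<forall>i. 0\<le>i \<and> i<n \<longrightarrow> (\<Sum>j\<in>{0..<n}. Q$$(i,j) * a j) \<ge> 0) \<longrightarrow> (\<forall>i. 0\<le>i \<and> i<n \<longrightarrow> a i = 0)"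
  proof (intro allI impI)
    fix a :: "nat \<Rightarrow> real" and i
    assume apos: "\<forall>i. 0\<le>i \<and> i<n \<longrightarrow> a i \<ge> 0"
      and asum: "\<forall>i. 0\<le>i \<and> i<n \<longrightarrow> (\<Sum>j\<in>{0..<n}. Q$$(i,j) * a j) \<ge> 0"
      and i: "0\<le>i \<and> i<n"
    define x where "x = (\<Sum>j<n. a j *\<^sub>R e j)"
    have "\<phi> i x = (\<Sum>j\<in>{0..<n}. Q$$(i,j) * a j)" if "i < n" for i
      using phi_sum[OF lin[OF that]] that by (auto simp: x_def Q_def atLeast0LessThan mult.commute intro!: sum.cong)
    then have "\<forall>i<n. \<phi> i x \<ge> 0" using asum by auto
    moreover have "x \<in> {\<Sum>i<n. c i *\<^sub>R e i | c. \<forall>i<n. c i \<ge> 0}" using apos x_def by auto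
    ultimately have "x = 0" using c by blast
    then have "\<forall>i<n. a i = 0" using a[of a] apos x_def by auto
    then show "a i = 0" using i by auto
  qed
  obtain A B where AB: "A \<in> carrier_mat n n" "B \<in> carrier_mat n n" "lower_triangular A" "upper_triangular B"
     "nonneg_mat A" "nonneg_mat B" "det A > 0" "det B > 0" "A*Q*B = -1\<^sub>m n"
     "transpose_mat Q = Q \<longrightarrow> B = transpose_mat A"
    using core[of 0 n Q] Qc negM b by (auto simp: Q_def)
  have part1: "(\<exists>A B. A \<in> carrier_mat n n \<and> B \<in> carrier_mat n n \<and>
                   lower_triangular A \<and> upper_triangular B \<and>
                   nonneg_mat A \<and> nonneg_mat B \<and> det A > 0 \<and> det B > 0 \<and>
                   A * Q * B = - 1\<^sub>m n)" using AB by blast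
  have part2: "transpose_mat Q = Q \<longrightarrow>
              (\<exists>A. A \<in> carrier_mat n n \<and> lower_triangular A \<and>
                   upper_triangular (transpose_mat A) \<and>
                   nonneg_mat A \<and> nonneg_mat (transpose_mat A) \<and>
                   det A > 0 \<and> det (transpose_mat A) > 0 \<and>
                   A * Q * transpose_mat A = - 1\<^sub>m n)"
    using AB by metis
  have "-1\<^sub>m n = (-1::real) \<cdot>\<^sub>m 1\<^sub>m n" by (intro eq_matI) auto
  then have dm: "det (-1\<^sub>m n :: real mat) \<noteq> 0" by simp
  have AQ: "A*Q \<in> carrier_mat n n" using AB Qc by auto
  have "det (A*Q*B) = det A * det Q * det B"
    using det_mult[OF AQ AB(2)] det_mult[OF AB(1) Qc] by simp
  then have dQ: "det Q \<noteq> 0" using AB(9) dm by auto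
  have part3: "\<forall>c. (\<Sum>j<n. c j *\<^sub>R e j) \<in> {x. \<forall>i<n. \<phi> i x = 0} \<longrightarrow> (\<forall>j<n. c j = 0)"
  proof (intro allI impI)
    fix cc :: "nat \<Rightarrow> real" and j
    assume h: "(\<Sum>j<n. cc j *\<^sub>R e j) \<in> {x. \<forall>i<n. \<phi> i x = 0}" and j: "j < n"
    have "Q *\<^sub>v vec n cc = 0\<^sub>v n"
    proof (rule eq_vecI)
      fix i assume "i < dim_vec (0\<^sub>v n :: real vec)"
      then have i: "i < n" by simp
      have "(Q *\<^sub>v vec n cc) $ i = (\<Sum>j\<in>{0..<n}. \<phi> i (e j) * cc j)"
        using i by (simp add: Q_def scalar_prod_def)
      also have "\<dots> = \<phi> i (\<Sum>j<n. cc j *\<^sub>R e j)"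
        using phi_sum[OF lin[OF i], of cc e n] by (simp add: atLeast0LessThan algebra_simps)
      also have "\<dots> = 0" using h i by auto
      finally show "(Q *\<^sub>v vec n cc) $ i = 0\<^sub>v n $ i" using i by simp
    qed (simp add: Q_def)
    moreover have "vec n cc \<in> carrier_vec n" by simp
    ultimately have "vec n cc = 0\<^sub>v n" using dQ det_0_iff_vec_prod_zero[OF Qc] by blast
    then show "cc j = 0" using j by (metis index_vec index_zero_vec(1))
  qed
  show ?thesis using part1 part2 part3 unfolding Q_def Let_def by blast
qed

end
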